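(* Let $R=\mathbb{Z}$ or $\mathbb{Z}[i]$, let $A_0=(a_1|a_2)\in R^{4\times2}$ be a $2$-icube of norm $\lambda$, and let $\Lambda=\{w\in R^4: a_1^*w=a_2^*w=0\}$. Then for all $x,y\in\Lambda$, $\lambda$ divides $|d_2(A_0)|^2\,y^*x$ in $R$.
   Context: A $2$-icube of norm $\lambda>0$ is $(a_1|a_2)$ with $a_1^*a_1=a_2^*a_2=\lambda$, $a_1^*a_2=0$. $d_2(A_0)$ is the gcd of the $2\times2$ minors of $A_0$ (defined up to a unit). *)

theory Defs
  imports "HOL-Analysis.Analysis"
begin

text \<open>Both rings R = Z and R = Z[i] are realised as subrings of the complex numbers.\<close>

definition ZZ_ring :: "complex set" where
  "ZZ_ring = {z. Re z \<in> \<int> \<and> Im z = 0}"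

definition gauss_ring :: "complex set" where
  "gauss_ring = {z. Re z \<in> \<int> \<and> Im z \<in> \<int>}"

definition rdvd :: "complex set \<Rightarrow> complex \<Rightarrow> complex \<Rightarrow> bool" where
  "rdvd R a b \<longleftrightarrow> (\<exists>q\<in>R. b = a * q)"

definition is_gcd_in :: "complex set \<Rightarrow> complex set \<Rightarrow> complex \<Rightarrow> bool" where
  "is_gcd_in R S d \<longleftrightarrow> d \<in> R \<and> (\<forall>s\<in>S. rdvd R d s) \<and>
     (\<forall>e\<in>R. (\<forall>s\<in>S. rdvd R e s) \<longrightarrow> rdvd R e d)"

definition hprod :: "complex ^ 'n \<Rightarrow> complex ^ 'n \<Rightarrow> complex" where
  "hprod y x = (\<Sum>i\<in>UNIV. cnj (y $ i) * x $ i)"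

definition icube2 :: "real \<Rightarrow> complex ^ 'n \<Rightarrow> complex ^ 'n \<Rightarrow> bool" where
  "icube2 lam a1 a2 \<longleftrightarrow> lam > 0 \<and> hprod a1 a1 = complex_of_real lam \<and>
     hprod a2 a2 = complex_of_real lam \<and> hprod a1 a2 = 0"

definition minors2 :: "complex ^ 4 \<Rightarrow> complex ^ 4 \<Rightarrow> complex set" where
  "minors2 a1 a2 = {a1 $ i * a2 $ j - a1 $ j * a2 $ i | i j. i < j}"

end

theory Submission
  imports Defs
begin

definition good :: "complex set \<Rightarrow> bool" where
  "good R \<longleftrightarrow> R = ZZ_ring \<or> R = gauss_ring"

lemma good_sub: "good R \<Longrightarrow> z \<in> R \<Longrightarrow> Re z \<in> \<int> \<and> Im z \<in> \<int>"
  unfolding good_def ZZ_ring_def gauss_ring_def by auto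

lemma good_0 [simp]: "good R \<Longrightarrow> 0 \<in> R"
  unfolding good_def ZZ_ring_def gauss_ring_def by auto

lemma good_1 [simp]: "good R \<Longrightarrow> 1 \<in> R"
  unfolding good_def ZZ_ring_def gauss_ring_def by auto

lemma good_add [simp]: "good R \<Longrightarrow> x \<in> R \<Longrightarrow> y \<in> R \<Longrightarrow> x + y \<in> R"
  unfolding good_def ZZ_ring_def gauss_ring_def by auto

lemma good_minus [simp]: "good R \<Longrightarrow> x \<in> R \<Longrightarrow> - x \<in> R"
  unfolding good_def ZZ_ring_def gauss_ring_def by auto

lemma good_diff [simp]: "good R \<Longrightarrow> x \<in> R \<Longrightarrow> y \<in> R \<Longrightarrow> x - y \<in> R"
  unfolding good_def ZZ_ring_def gauss_ring_def by auto

lemma good_mult [simp]: "good R \<Longrightarrow> x \<in> R \<Longrightarrow> y \<in> R \<Longrightarrow> x * y \<in> R"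
  unfolding good_def ZZ_ring_def gauss_ring_def by auto

lemma good_cnj [simp]: "good R \<Longrightarrow> x \<in> R \<Longrightarrow> cnj x \<in> R"
  unfolding good_def ZZ_ring_def gauss_ring_def by auto

lemma good_sum [simp]: "good R \<Longrightarrow> (\<And>k. k \<in> K \<Longrightarrow> f k \<in> R) \<Longrightarrow> sum f K \<in> R"
proof (induction K rule: infinite_finite_induct)
  case (infinite A) then show ?case by simp
next
  case empty then show ?case by simp
next
  case (insert x F) then show ?case by simp
qed

definition nrm :: "complex \<Rightarrow> nat" where
  "nrm z = nat \<lfloor>(cmod z)\<^sup>2\<rfloor>"

lemma nrm_real: assumes "good R" "z \<in> R" shows "real (nrm z) = (cmod z)\<^sup>2"
proof -
  obtain a b where ab: "Re z = of_int a" "Im z = of_int b"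
    using good_sub[OF assms] by (auto elim!: Ints_cases)
  have "(cmod z)\<^sup>2 = of_int (a\<^sup>2 + b\<^sup>2)" by (simp add: cmod_power2 ab)
  moreover have "a\<^sup>2 + b\<^sup>2 \<ge> 0" by simp
  ultimately show ?thesis unfolding nrm_def by simp
qed

definition rnd :: "complex \<Rightarrow> complex" where
  "rnd w = Complex (of_int (round (Re w))) (of_int (round (Im w)))"

lemma rnd_close: "(cmod (w - rnd w))\<^sup>2 \<le> 1/2"
proof -
  have a: "\<bar>Re w - of_int (round (Re w))\<bar> \<le> 1/2" using of_int_round_abs_le[of "Re w"] by linarith
  have b: "\<bar>Im w - of_int (round (Im w))\<bar> \<le> 1/2" using of_int_round_abs_le[of "Im w"] by linarith
  have a2: "(Re w - of_int (round (Re w)))\<^sup>2 \<le> (1/2)\<^sup>2"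
    using a by (metis abs_ge_zero abs_le_square_iff abs_of_nonneg power2_abs zero_le_divide_1_iff zero_le_numeral)
  have b2: "(Im w - of_int (round (Im w)))\<^sup>2 \<le> (1/2)\<^sup>2"
    using b by (metis abs_ge_zero abs_le_square_iff abs_of_nonneg power2_abs zero_le_divide_1_iff zero_le_numeral)
  have "(cmod (w - rnd w))\<^sup>2 = (Re w - of_int (round (Re w)))\<^sup>2 + (Im w - of_int (round (Im w)))\<^sup>2"
    by (simp add: cmod_power2 rnd_def)
  then show ?thesis using a2 b2 by (simp add: power_divide)
qed

lemma rnd_in: assumes "good R" "z \<in> R" "g \<in> R" shows "rnd (z / g) \<in> R"
  using assms unfolding good_def ZZ_ring_def gauss_ring_def rnd_def
  by (auto simp: Im_divide)

lemma bezout: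
  fixes m :: "'k::finite \<Rightarrow> complex"
  assumes R: "good R" and mR: "\<forall>k. m k \<in> R"
  shows "\<exists>g\<in>R. \<exists>c. (\<forall>k. c k \<in> R) \<and> g = (\<Sum>k\<in>UNIV. c k * m k) \<and> (\<forall>k. rdvd R g (m k))"
proof (cases "\<forall>k. m k = 0")
  case True
  have "\<exists>q. q \<in> R" using good_0[OF R] by blast
  then show ?thesis using R True
    by (intro bexI[of _ 0] exI[of _ "\<lambda>_. 0"]) (auto simp: rdvd_def)
next
  case False
  then obtain k0 where k0: "m k0 \<noteq> 0" by auto
  define I where "I = {z. \<exists>c. (\<forall>k. c k \<in> R) \<and> z = (\<Sum>k\<in>UNIV. c k * m k)}"
  have IR: "z \<in> R" if "z \<in> I" for z
    using that R mR unfolding I_def by auto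
  have mI: "m k1 \<in> I" for k1
  proof -
    have "(\<Sum>k\<in>UNIV. (if k = k1 then 1 else 0) * m k) = (\<Sum>k\<in>UNIV. if k = k1 then m k else 0)"
      by (rule sum.cong) auto
    then have "m k1 = (\<Sum>k\<in>UNIV. (if k = k1 then 1 else 0) * m k)" by simp
    then show ?thesis unfolding I_def using R by (intro CollectI exI[of _ "\<lambda>k. if k = k1 then 1 else 0"]) auto
  qed
  have Icomb: "z - q * g \<in> I" if "z \<in> I" "g \<in> I" "q \<in> R" for z g q
  proof -
    obtain c where c: "\<forall>k. c k \<in> R" "z = (\<Sum>k\<in>UNIV. c k * m k)" using \<open>z \<in> I\<close> unfolding I_def by auto
    obtain c' where c': "\<forall>k. c' k \<in> R" "g = (\<Sum>k\<in>UNIV. c' k * m k)" using \<open>g \<in> I\<close> unfolding I_def by auto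
    have "z - q * g = (\<Sum>k\<in>UNIV. (c k - q * c' k) * m k)"
      unfolding c c' by (simp add: sum_subtractf sum_distrib_left algebra_simps)
    moreover have "\<forall>k. c k - q * c' k \<in> R" using c c' R \<open>q \<in> R\<close> by auto
    ultimately show ?thesis unfolding I_def by (intro CollectI exI[of _ "\<lambda>k. c k - q * c' k"]) auto
  qed
  define P where "P n \<longleftrightarrow> (\<exists>z\<in>I. z \<noteq> 0 \<and> nrm z = n)" for n
  have "\<exists>n. P n" using mI[of k0] k0 unfolding P_def by auto
  then obtain n where Pn: "P n" and nmin: "\<And>n'. n' < n \<Longrightarrow> \<not> P n'"
    unfolding exists_least_iff[of P] by auto
  then obtain g where gI: "g \<in> I" and g0: "g \<noteq> 0" and gn: "nrm g = n" unfolding P_def by auto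
  have gR: "g \<in> R" using IR gI .
  obtain c where c: "\<forall>k. c k \<in> R" "g = (\<Sum>k\<in>UNIV. c k * m k)" using gI unfolding I_def by auto
  have dv: "rdvd R g (m k)" for k
  proof -
    define q where "q = rnd (m k / g)"
    have qR: "q \<in> R" unfolding q_def using rnd_in R mR gR by blast
    define r where "r = m k - q * g"
    have rI: "r \<in> I" unfolding r_def using Icomb mI gI qR by blast
    have rR: "r \<in> R" using IR rI .
    have req: "r = g * (m k / g - q)" unfolding r_def using g0 by (simp add: algebra_simps)
    have "(cmod r)\<^sup>2 = (cmod g)\<^sup>2 * (cmod (m k / g - q))\<^sup>2"
      unfolding req by (simp add: norm_mult power_mult_distrib)
    also have "\<dots> \<le> (cmod g)\<^sup>2 * (1/2)"
      using rnd_close[of "m k / g"] unfolding q_def by (intro mult_left_mono) auto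
    also have "\<dots> < (cmod g)\<^sup>2" using g0 by simp
    finally have "(cmod r)\<^sup>2 < (cmod g)\<^sup>2" .
    then have "real (nrm r) < real (nrm g)" using nrm_real[OF R rR] nrm_real[OF R gR] by simp
    then have "nrm r < n" using gn by simp
    then have "\<not> P (nrm r)" using nmin by blast
    then have "r = 0" using rI unfolding P_def by auto
    then have "m k = g * q" unfolding r_def by (simp add: algebra_simps)
    then show ?thesis unfolding rdvd_def using qR by blast
  qed
  show ?thesis using gR c dv by blast
qed

definition dl :: "4 \<Rightarrow> 4 \<Rightarrow> complex" where "dl i j = (if i = j then 1 else 0)"

definition Sf :: "(4\<Rightarrow>complex) \<Rightarrow> (4\<Rightarrow>complex) \<Rightarrow> (4\<Rightarrow>complex) \<Rightarrow> (4\<Rightarrow>complex) \<Rightarrow> 4 \<Rightarrow> 4 \<Rightarrow> complex" where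
  "Sf A1 C1 A2 C2 i j = A1 i * C1 j + A2 i * C2 j"

definition tf :: "(4\<Rightarrow>complex) \<Rightarrow> (4\<Rightarrow>complex) \<Rightarrow> complex" where
  "tf X Y = Y 1 * X 1 + Y 2 * X 2 + Y 3 * X 3 + Y 4 * X 4"

definition Nf :: "(4\<Rightarrow>complex) \<Rightarrow> (4\<Rightarrow>complex) \<Rightarrow> 4 \<Rightarrow> 4 \<Rightarrow> complex" where
  "Nf X Y i j = tf X Y * dl i j - X i * Y j"

definition Ef :: "(4\<Rightarrow>complex) \<Rightarrow> (4\<Rightarrow>complex) \<Rightarrow> (4\<Rightarrow>complex) \<Rightarrow> (4\<Rightarrow>complex) \<Rightarrow> (4\<Rightarrow>complex) \<Rightarrow> (4\<Rightarrow>complex) \<Rightarrow> complex \<Rightarrow> 4 \<Rightarrow> 4 \<Rightarrow> 4 \<Rightarrow> 4 \<Rightarrow> complex" where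
  "Ef A1 C1 A2 C2 X Y l a b e f =
    (Sf A1 C1 A2 C2 a e * Nf X Y b f + Nf X Y a e * Sf A1 C1 A2 C2 b f
     - Sf A1 C1 A2 C2 a f * Nf X Y b e - Nf X Y a f * Sf A1 C1 A2 C2 b e)
    - l * (tf X Y * (dl a e * dl b f - dl a f * dl b e)
       - (dl a e * X b * Y f + X a * Y e * dl b f - dl a f * X b * Y e - X a * Y f * dl b e))"

definition Pk where
  "Pk A1 C1 A2 C2 X Y l a b e f \<longleftrightarrow>
    (Sf A1 C1 A2 C2 a e * Sf A1 C1 A2 C2 b f - Sf A1 C1 A2 C2 a f * Sf A1 C1 A2 C2 b e) * tf X Y
      = l * Ef A1 C1 A2 C2 X Y l a b e f"

lemma dl_vals: "dl 1 1 = 1" "dl 1 2 = 0" "dl 1 3 = 0" "dl 1 4 = 0" "dl 2 1 = 0" "dl 2 2 = 1" "dl 2 3 = 0" "dl 2 4 = 0" "dl 3 1 = 0" "dl 3 2 = 0" "dl 3 3 = 1" "dl 3 4 = 0" "dl 4 1 = 0" "dl 4 2 = 0" "dl 4 3 = 0" "dl 4 4 = 1"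
  by (simp_all add: dl_def)

lemma key36:
  fixes A1 C1 A2 C2 X Y :: "4 \<Rightarrow> complex" and l :: complex
  assumes h1: "C1 1 * X 1 + C1 2 * X 2 + C1 3 * X 3 + C1 4 * X 4 = 0"
    and h2: "C2 1 * X 1 + C2 2 * X 2 + C2 3 * X 3 + C2 4 * X 4 = 0"
    and h3: "A1 1 * Y 1 + A1 2 * Y 2 + A1 3 * Y 3 + A1 4 * Y 4 = 0"
    and h4: "A2 1 * Y 1 + A2 2 * Y 2 + A2 3 * Y 3 + A2 4 * Y 4 = 0"
    and h5: "C1 1 * A1 1 + C1 2 * A1 2 + C1 3 * A1 3 + C1 4 * A1 4 = l"
    and h6: "C2 1 * A2 1 + C2 2 * A2 2 + C2 3 * A2 3 + C2 4 * A2 4 = l"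
    and h7: "C1 1 * A2 1 + C1 2 * A2 2 + C1 3 * A2 3 + C1 4 * A2 4 = 0"
    and h8: "A1 1 * C2 1 + A1 2 * C2 2 + A1 3 * C2 3 + A1 4 * C2 4 = 0"
  shows "(a,b) \<in> {(1,2),(1,3),(1,4),(2,3),(2,4),(3,4)} \<Longrightarrow> (e,f) \<in> {(1,2),(1,3),(1,4),(2,3),(2,4),(3,4)} \<Longrightarrow> Pk A1 C1 A2 C2 X Y l a b e f"
proof -

  have c1212: "Pk A1 C1 A2 C2 X Y l 1 2 1 2"
    unfolding Pk_def Ef_def Nf_def Sf_def tf_def dl_vals using h1 h2 h3 h4 h5 h6 h7 h8 by algebra

  have c1213: "Pk A1 C1 A2 C2 X Y l 1 2 1 3"
    unfolding Pk_def Ef_def Nf_def Sf_def tf_def dl_vals using h1 h2 h3 h4 h5 h6 h7 h8 by algebra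

  have c1214: "Pk A1 C1 A2 C2 X Y l 1 2 1 4"
    unfolding Pk_def Ef_def Nf_def Sf_def tf_def dl_vals using h1 h2 h3 h4 h5 h6 h7 h8 by algebra

  have c1223: "Pk A1 C1 A2 C2 X Y l 1 2 2 3"
    unfolding Pk_def Ef_def Nf_def Sf_def tf_def dl_vals using h1 h2 h3 h4 h5 h6 h7 h8 by algebra

  have c1224: "Pk A1 C1 A2 C2 X Y l 1 2 2 4"
    unfolding Pk_def Ef_def Nf_def Sf_def tf_def dl_vals using h1 h2 h3 h4 h5 h6 h7 h8 by algebra

  have c1234: "Pk A1 C1 A2 C2 X Y l 1 2 3 4"
    unfolding Pk_def Ef_def Nf_def Sf_def tf_def dl_vals using h1 h2 h3 h4 h5 h6 h7 h8 by algebra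

  have c1312: "Pk A1 C1 A2 C2 X Y l 1 3 1 2"
    unfolding Pk_def Ef_def Nf_def Sf_def tf_def dl_vals using h1 h2 h3 h4 h5 h6 h7 h8 by algebra

  have c1313: "Pk A1 C1 A2 C2 X Y l 1 3 1 3"
    unfolding Pk_def Ef_def Nf_def Sf_def tf_def dl_vals using h1 h2 h3 h4 h5 h6 h7 h8 by algebra

  have c1314: "Pk A1 C1 A2 C2 X Y l 1 3 1 4"
    unfolding Pk_def Ef_def Nf_def Sf_def tf_def dl_vals using h1 h2 h3 h4 h5 h6 h7 h8 by algebra

  have c1323: "Pk A1 C1 A2 C2 X Y l 1 3 2 3"
    unfolding Pk_def Ef_def Nf_def Sf_def tf_def dl_vals using h1 h2 h3 h4 h5 h6 h7 h8 by algebra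

  have c1324: "Pk A1 C1 A2 C2 X Y l 1 3 2 4"
    unfolding Pk_def Ef_def Nf_def Sf_def tf_def dl_vals using h1 h2 h3 h4 h5 h6 h7 h8 by algebra

  have c1334: "Pk A1 C1 A2 C2 X Y l 1 3 3 4"
    unfolding Pk_def Ef_def Nf_def Sf_def tf_def dl_vals using h1 h2 h3 h4 h5 h6 h7 h8 by algebra

  have c1412: "Pk A1 C1 A2 C2 X Y l 1 4 1 2"
    unfolding Pk_def Ef_def Nf_def Sf_def tf_def dl_vals using h1 h2 h3 h4 h5 h6 h7 h8 by algebra

  have c1413: "Pk A1 C1 A2 C2 X Y l 1 4 1 3"
    unfolding Pk_def Ef_def Nf_def Sf_def tf_def dl_vals using h1 h2 h3 h4 h5 h6 h7 h8 by algebra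

  have c1414: "Pk A1 C1 A2 C2 X Y l 1 4 1 4"
    unfolding Pk_def Ef_def Nf_def Sf_def tf_def dl_vals using h1 h2 h3 h4 h5 h6 h7 h8 by algebra

  have c1423: "Pk A1 C1 A2 C2 X Y l 1 4 2 3"
    unfolding Pk_def Ef_def Nf_def Sf_def tf_def dl_vals using h1 h2 h3 h4 h5 h6 h7 h8 by algebra

  have c1424: "Pk A1 C1 A2 C2 X Y l 1 4 2 4"
    unfolding Pk_def Ef_def Nf_def Sf_def tf_def dl_vals using h1 h2 h3 h4 h5 h6 h7 h8 by algebra

  have c1434: "Pk A1 C1 A2 C2 X Y l 1 4 3 4"
    unfolding Pk_def Ef_def Nf_def Sf_def tf_def dl_vals using h1 h2 h3 h4 h5 h6 h7 h8 by algebra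

  have c2312: "Pk A1 C1 A2 C2 X Y l 2 3 1 2"
    unfolding Pk_def Ef_def Nf_def Sf_def tf_def dl_vals using h1 h2 h3 h4 h5 h6 h7 h8 by algebra

  have c2313: "Pk A1 C1 A2 C2 X Y l 2 3 1 3"
    unfolding Pk_def Ef_def Nf_def Sf_def tf_def dl_vals using h1 h2 h3 h4 h5 h6 h7 h8 by algebra

  have c2314: "Pk A1 C1 A2 C2 X Y l 2 3 1 4"
    unfolding Pk_def Ef_def Nf_def Sf_def tf_def dl_vals using h1 h2 h3 h4 h5 h6 h7 h8 by algebra

  have c2323: "Pk A1 C1 A2 C2 X Y l 2 3 2 3"
    unfolding Pk_def Ef_def Nf_def Sf_def tf_def dl_vals using h1 h2 h3 h4 h5 h6 h7 h8 by algebra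

  have c2324: "Pk A1 C1 A2 C2 X Y l 2 3 2 4"
    unfolding Pk_def Ef_def Nf_def Sf_def tf_def dl_vals using h1 h2 h3 h4 h5 h6 h7 h8 by algebra

  have c2334: "Pk A1 C1 A2 C2 X Y l 2 3 3 4"
    unfolding Pk_def Ef_def Nf_def Sf_def tf_def dl_vals using h1 h2 h3 h4 h5 h6 h7 h8 by algebra

  have c2412: "Pk A1 C1 A2 C2 X Y l 2 4 1 2"
    unfolding Pk_def Ef_def Nf_def Sf_def tf_def dl_vals using h1 h2 h3 h4 h5 h6 h7 h8 by algebra

  have c2413: "Pk A1 C1 A2 C2 X Y l 2 4 1 3"
    unfolding Pk_def Ef_def Nf_def Sf_def tf_def dl_vals using h1 h2 h3 h4 h5 h6 h7 h8 by algebra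

  have c2414: "Pk A1 C1 A2 C2 X Y l 2 4 1 4"
    unfolding Pk_def Ef_def Nf_def Sf_def tf_def dl_vals using h1 h2 h3 h4 h5 h6 h7 h8 by algebra

  have c2423: "Pk A1 C1 A2 C2 X Y l 2 4 2 3"
    unfolding Pk_def Ef_def Nf_def Sf_def tf_def dl_vals using h1 h2 h3 h4 h5 h6 h7 h8 by algebra

  have c2424: "Pk A1 C1 A2 C2 X Y l 2 4 2 4"
    unfolding Pk_def Ef_def Nf_def Sf_def tf_def dl_vals using h1 h2 h3 h4 h5 h6 h7 h8 by algebra

  have c2434: "Pk A1 C1 A2 C2 X Y l 2 4 3 4"
    unfolding Pk_def Ef_def Nf_def Sf_def tf_def dl_vals using h1 h2 h3 h4 h5 h6 h7 h8 by algebra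

  have c3412: "Pk A1 C1 A2 C2 X Y l 3 4 1 2"
    unfolding Pk_def Ef_def Nf_def Sf_def tf_def dl_vals using h1 h2 h3 h4 h5 h6 h7 h8 by algebra

  have c3413: "Pk A1 C1 A2 C2 X Y l 3 4 1 3"
    unfolding Pk_def Ef_def Nf_def Sf_def tf_def dl_vals using h1 h2 h3 h4 h5 h6 h7 h8 by algebra

  have c3414: "Pk A1 C1 A2 C2 X Y l 3 4 1 4"
    unfolding Pk_def Ef_def Nf_def Sf_def tf_def dl_vals using h1 h2 h3 h4 h5 h6 h7 h8 by algebra

  have c3423: "Pk A1 C1 A2 C2 X Y l 3 4 2 3"
    unfolding Pk_def Ef_def Nf_def Sf_def tf_def dl_vals using h1 h2 h3 h4 h5 h6 h7 h8 by algebra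

  have c3424: "Pk A1 C1 A2 C2 X Y l 3 4 2 4"
    unfolding Pk_def Ef_def Nf_def Sf_def tf_def dl_vals using h1 h2 h3 h4 h5 h6 h7 h8 by algebra

  have c3434: "Pk A1 C1 A2 C2 X Y l 3 4 3 4"
    unfolding Pk_def Ef_def Nf_def Sf_def tf_def dl_vals using h1 h2 h3 h4 h5 h6 h7 h8 by algebra

  show "(a,b) \<in> {(1,2),(1,3),(1,4),(2,3),(2,4),(3,4)} \<Longrightarrow> (e,f) \<in> {(1,2),(1,3),(1,4),(2,3),(2,4),(3,4)} \<Longrightarrow> Pk A1 C1 A2 C2 X Y l a b e f"
    using c1212 c1213 c1214 c1223 c1224 c1234 c1312 c1313 c1314 c1323 c1324 c1334 c1412 c1413 c1414 c1423 c1424 c1434 c2312 c2313 c2314 c2323 c2324 c2334 c2412 c2413 c2414 c2423 c2424 c2434 c3412 c3413 c3414 c3423 c3424 c3434 by auto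
qed

lemma Pk_swap1: "Pk A1 C1 A2 C2 X Y l b a e f \<longleftrightarrow> Pk A1 C1 A2 C2 X Y l a b e f"
proof -
  have "Ef A1 C1 A2 C2 X Y l b a e f = - Ef A1 C1 A2 C2 X Y l a b e f"
    unfolding Ef_def by (simp add: algebra_simps)
  then show ?thesis unfolding Pk_def by (auto simp: algebra_simps)
qed

lemma Pk_swap2: "Pk A1 C1 A2 C2 X Y l a b f e \<longleftrightarrow> Pk A1 C1 A2 C2 X Y l a b e f"
proof -
  have "Ef A1 C1 A2 C2 X Y l a b f e = - Ef A1 C1 A2 C2 X Y l a b e f"
    unfolding Ef_def by (simp add: algebra_simps)
  then show ?thesis unfolding Pk_def by (auto simp: algebra_simps)
qed

lemma pairs4: "(a::4) \<noteq> b \<Longrightarrow> (a,b) \<in> {(1,2),(1,3),(1,4),(2,3),(2,4),(3,4)} \<or> (b,a) \<in> {(1,2),(1,3),(1,4),(2,3),(2,4),(3,4)}"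
  using exhaust_4[of a] exhaust_4[of b] by auto

lemma key_all:
  fixes A1 C1 A2 C2 X Y :: "4 \<Rightarrow> complex" and l :: complex
  assumes h1: "C1 1 * X 1 + C1 2 * X 2 + C1 3 * X 3 + C1 4 * X 4 = 0"
    and h2: "C2 1 * X 1 + C2 2 * X 2 + C2 3 * X 3 + C2 4 * X 4 = 0"
    and h3: "A1 1 * Y 1 + A1 2 * Y 2 + A1 3 * Y 3 + A1 4 * Y 4 = 0"
    and h4: "A2 1 * Y 1 + A2 2 * Y 2 + A2 3 * Y 3 + A2 4 * Y 4 = 0"
    and h5: "C1 1 * A1 1 + C1 2 * A1 2 + C1 3 * A1 3 + C1 4 * A1 4 = l"
    and h6: "C2 1 * A2 1 + C2 2 * A2 2 + C2 3 * A2 3 + C2 4 * A2 4 = l"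
    and h7: "C1 1 * A2 1 + C1 2 * A2 2 + C1 3 * A2 3 + C1 4 * A2 4 = 0"
    and h8: "A1 1 * C2 1 + A1 2 * C2 2 + A1 3 * C2 3 + A1 4 * C2 4 = 0"
    and ab: "a \<noteq> b" and ef: "e \<noteq> f"
  shows "Pk A1 C1 A2 C2 X Y l a b e f"
proof -
  note K = key36[OF h1 h2 h3 h4 h5 h6 h7 h8]
  from pairs4[OF ab] pairs4[OF ef] show ?thesis
    using K Pk_swap1 Pk_swap2 by metis
qed

lemma Ef_in:
  assumes "good R" "\<And>i. A1 i \<in> R" "\<And>i. C1 i \<in> R" "\<And>i. A2 i \<in> R" "\<And>i. C2 i \<in> R"
    "\<And>i. X i \<in> R" "\<And>i. Y i \<in> R" "l \<in> R"
  shows "Ef A1 C1 A2 C2 X Y l a b e f \<in> R"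
proof -
  have dR: "dl i j \<in> R" for i j using assms(1) unfolding dl_def by auto
  show ?thesis using assms dR unfolding Ef_def Nf_def Sf_def tf_def by simp
qed



theorem mainTheorem18:
  fixes R :: "complex set" and a1 a2 :: "complex ^ 4" and lam :: real
  assumes "R = ZZ_ring \<or> R = gauss_ring"
    and "\<forall>i. a1 $ i \<in> R" and "\<forall>i. a2 $ i \<in> R"
    and "icube2 lam a1 a2"
  shows "\<forall>x y d. (\<forall>i. x $ i \<in> R) \<and> hprod a1 x = 0 \<and> hprod a2 x = 0 \<and>
           (\<forall>i. y $ i \<in> R) \<and> hprod a1 y = 0 \<and> hprod a2 y = 0 \<and>
           is_gcd_in R (minors2 a1 a2) d \<longrightarrow>
           rdvd R (complex_of_real lam) (complex_of_real ((cmod d)\<^sup>2) * hprod y x)"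
proof (intro allI impI)
  fix x y d
  assume H: "(\<forall>i. x $ i \<in> R) \<and> hprod a1 x = 0 \<and> hprod a2 x = 0 \<and>
           (\<forall>i. y $ i \<in> R) \<and> hprod a1 y = 0 \<and> hprod a2 y = 0 \<and>
           is_gcd_in R (minors2 a1 a2) d"
  have R: "good R" using assms(1) unfolding good_def .
  define L where "L = complex_of_real lam"
  have ic: "hprod a1 a1 = L" "hprod a2 a2 = L" "hprod a1 a2 = 0"
    using assms(4) unfolding icube2_def L_def by auto
  have a1R: "a1 $ i \<in> R" and a2R: "a2 $ i \<in> R" and xR: "x $ i \<in> R" and yR: "y $ i \<in> R" for i
    using assms(2,3) H by auto
  have LR: "L \<in> R" unfolding ic(1)[symmetric] hprod_def using R a1R by simp
  define t where "t = hprod y x"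
  define m :: "4 \<times> 4 \<Rightarrow> complex" where "m k = a1 $ fst k * a2 $ snd k - a1 $ snd k * a2 $ fst k" for k
  have mR: "\<forall>k. m k \<in> R" using R a1R a2R unfolding m_def by auto
  obtain g c where gR: "g \<in> R" and cR: "\<forall>k. c k \<in> R" and gc: "g = (\<Sum>k\<in>UNIV. c k * m k)"
    and gdv: "\<forall>k. rdvd R g (m k)"
    using bezout[OF R mR] by blast
  have "\<forall>s\<in>minors2 a1 a2. rdvd R g s"
  proof
    fix s assume "s \<in> minors2 a1 a2"
    then obtain i j where "s = m (i,j)" unfolding minors2_def m_def by auto
    then show "rdvd R g s" using gdv by simp
  qed
  then have "rdvd R g d" using H gR unfolding is_gcd_in_def by blast
  then obtain u where uR: "u \<in> R" and du: "d = g * u" unfolding rdvd_def by blast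
  define A1 where "A1 i = a1 $ i" for i
  define A2 where "A2 i = a2 $ i" for i
  define C1 where "C1 i = cnj (a1 $ i)" for i
  define C2 where "C2 i = cnj (a2 $ i)" for i
  define X where "X i = x $ i" for i
  define Y where "Y i = cnj (y $ i)" for i
  have cs: "cnj (hprod v w) = (\<Sum>i\<in>UNIV. v $ i * cnj (w $ i))" for v w :: "complex^4"
    unfolding hprod_def by (simp add: cnj_sum)
  have h1: "C1 1 * X 1 + C1 2 * X 2 + C1 3 * X 3 + C1 4 * X 4 = 0"
    using H unfolding C1_def X_def hprod_def sum_4 by simp
  have h2: "C2 1 * X 1 + C2 2 * X 2 + C2 3 * X 3 + C2 4 * X 4 = 0"
    using H unfolding C2_def X_def hprod_def sum_4 by simp
  have h3: "A1 1 * Y 1 + A1 2 * Y 2 + A1 3 * Y 3 + A1 4 * Y 4 = 0"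
    using H cs[of a1 y] unfolding A1_def Y_def sum_4 by simp
  have h4: "A2 1 * Y 1 + A2 2 * Y 2 + A2 3 * Y 3 + A2 4 * Y 4 = 0"
    using H cs[of a2 y] unfolding A2_def Y_def sum_4 by simp
  have h5: "C1 1 * A1 1 + C1 2 * A1 2 + C1 3 * A1 3 + C1 4 * A1 4 = L"
    using ic unfolding C1_def A1_def hprod_def sum_4 by simp
  have h6: "C2 1 * A2 1 + C2 2 * A2 2 + C2 3 * A2 3 + C2 4 * A2 4 = L"
    using ic unfolding C2_def A2_def hprod_def sum_4 by simp
  have h7: "C1 1 * A2 1 + C1 2 * A2 2 + C1 3 * A2 3 + C1 4 * A2 4 = 0"
    using ic unfolding C1_def A2_def hprod_def sum_4 by simp
  have h8: "A1 1 * C2 1 + A1 2 * C2 2 + A1 3 * C2 3 + A1 4 * C2 4 = 0"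
    using ic cs[of a1 a2] unfolding A1_def C2_def sum_4 by simp
  have tt: "tf X Y = t" unfolding tf_def t_def hprod_def sum_4 X_def Y_def by simp
  have ex: "\<exists>e\<in>R. m k * cnj (m k') * t = L * e" for k k'
  proof (cases "fst k = snd k \<or> fst k' = snd k'")
    case True
    then have "m k * cnj (m k') * t = L * 0" unfolding m_def by auto
    then show ?thesis using good_0[OF R] by blast
  next
    case False
    then have P: "Pk A1 C1 A2 C2 X Y L (fst k) (snd k) (fst k') (snd k')"
      using key_all[OF h1 h2 h3 h4 h5 h6 h7 h8] by blast
    have "m k * cnj (m k') = Sf A1 C1 A2 C2 (fst k) (fst k') * Sf A1 C1 A2 C2 (snd k) (snd k')
        - Sf A1 C1 A2 C2 (fst k) (snd k') * Sf A1 C1 A2 C2 (snd k) (fst k')"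
      unfolding m_def Sf_def A1_def A2_def C1_def C2_def by (simp add: algebra_simps)
    then have "m k * cnj (m k') * t = L * Ef A1 C1 A2 C2 X Y L (fst k) (snd k) (fst k') (snd k')"
      using P tt unfolding Pk_def by simp
    moreover have "Ef A1 C1 A2 C2 X Y L (fst k) (snd k) (fst k') (snd k') \<in> R"
      using R a1R a2R xR yR LR
      by (intro Ef_in) (auto simp: A1_def A2_def C1_def C2_def X_def Y_def)
    ultimately show ?thesis by blast
  qed
  define e where "e k k' = (SOME e. e \<in> R \<and> m k * cnj (m k') * t = L * e)" for k k'
  have eR: "e k k' \<in> R" and ee: "m k * cnj (m k') * t = L * e k k'" for k k'
  proof -
    have "\<exists>e. e \<in> R \<and> m k * cnj (m k') * t = L * e" using ex[of k k'] by blast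
    from someI_ex[OF this] show "e k k' \<in> R" "m k * cnj (m k') * t = L * e k k'"
      unfolding e_def by blast+
  qed
  have "g * cnj g * t = (\<Sum>k\<in>UNIV. \<Sum>k'\<in>UNIV. (c k * m k) * (cnj (c k') * cnj (m k'))) * t"
    unfolding gc cnj_sum sum_product by simp
  also have "\<dots> = (\<Sum>k\<in>UNIV. \<Sum>k'\<in>UNIV. c k * cnj (c k') * (m k * cnj (m k') * t))"
    unfolding sum_distrib_right by (intro sum.cong refl) (simp add: algebra_simps)
  also have "\<dots> = L * (\<Sum>k\<in>UNIV. \<Sum>k'\<in>UNIV. c k * cnj (c k') * e k k')"
    unfolding ee sum_distrib_left by (intro sum.cong refl) (simp add: algebra_simps)
  finally have gg: "g * cnj g * t = L * (\<Sum>k\<in>UNIV. \<Sum>k'\<in>UNIV. c k * cnj (c k') * e k k')" .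
  have "complex_of_real ((cmod d)\<^sup>2) * hprod y x = d * cnj d * t"
    unfolding t_def complex_norm_square by simp
  also have "\<dots> = (u * cnj u) * (g * cnj g * t)" unfolding du by (simp add: algebra_simps)
  also have "\<dots> = L * ((u * cnj u) * (\<Sum>k\<in>UNIV. \<Sum>k'\<in>UNIV. c k * cnj (c k') * e k k'))"
    unfolding gg by (simp add: algebra_simps)
  finally have fin: "complex_of_real ((cmod d)\<^sup>2) * hprod y x = L * ((u * cnj u) * (\<Sum>k\<in>UNIV. \<Sum>k'\<in>UNIV. c k * cnj (c k') * e k k'))" .
  have "(u * cnj u) * (\<Sum>k\<in>UNIV. \<Sum>k'\<in>UNIV. c k * cnj (c k') * e k k') \<in> R"
    using R uR cR eR by (auto intro!: good_mult good_cnj good_sum)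
  then show "rdvd R (complex_of_real lam) (complex_of_real ((cmod d)\<^sup>2) * hprod y x)"
    unfolding rdvd_def L_def[symmetric] using fin by blast
qed

end
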